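(* Let $m_1<m_2<\dots<m_k<m_{k+1}=n$ be positive integers with $m_i\mid m_{i+1}$ for all $1\le i\le k$. Let $\alpha$ be a primitive element of $\mathbb{F}_{q^n}$, $\alpha_i=\alpha^{(q^n-1)/(q^{m_i}-1)}$ (a primitive element of $\mathbb{F}_{q^{m_i}}$) and $L_{i}=m_{i}/m_{i-1}$ for $2\le i\le k+1$. For $1\le i\le k$ let $\mathcal{F}^i$ be the flag of type $(m_i,2m_i,\dots,m_{i+1}-m_i)$ with subspaces $\mathcal{F}^i_j=\bigoplus_{t=0}^{j-1}\mathbb{F}_{q^{m_i}}\alpha_{i+1}^t$, $1\le j\le L_{i+1}-1$. Then for each $1\le i\le k$, the code $\mathrm{Orb}(\mathcal{F}^i)$ is consistent, has minimum distance $2(m_{i+1}-m_i)$, and has $\mathbb{F}_{q^{m_i}}$ as its best friend.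
   Context: $q$ prime power; subspaces are $\mathbb{F}_q$-subspaces of $\mathbb{F}_{q^n}$; a flag is a chain $\{0\}\subsetneq\mathcal{F}_1\subsetneq\cdots\subsetneq\mathcal{F}_r\subsetneq\mathbb{F}_{q^n}$. $d_S(\mathcal{U},\mathcal{V})=\dim(\mathcal{U}+\mathcal{V})-\dim(\mathcal{U}\cap\mathcal{V})$, $d_f(\mathcal{F},\mathcal{F}')=\sum_i d_S(\mathcal{F}_i,\mathcal{F}'_i)$, $\mathrm{Orb}(\mathcal{F})=\{\mathcal{F}\alpha^j:j\ge0\}$ with $\mathcal{F}\alpha^j=(\mathcal{F}_1\alpha^j,\dots)$; the minimum distance of a code is the minimum distance between distinct codewords ($0$ if there is only one). The $i$-th projected code of a flag code $\mathcal{C}$ is $\mathcal{C}_i=\{\mathcal{F}_i:\mathcal{F}\in\mathcal{C}\}$; $\mathcal{C}$ is disjoint if $|\mathcal{C}_i|=|\mathcal{C}|$ for all $i$, and consistent if it is disjoint and $d_f(\mathcal{C})=\sum_i d_S(\mathcal{C}_i)$. A subfield $\mathbb{F}_{q^m}$ is a friend of a subspace if the subspace is an $\mathbb{F}_{q^m}$-vector space; a friend of a flag is a common friend of all its subspaces; the best friend is the largest friend. *)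

theory Defs
  imports Main "HOL-Computational_Algebra.Primes"
begin

text \<open>Ambient field: a finite field type 'a of cardinality q^n, i.e. F_{q^n}.
  The subfield F_{q^m} (m dividing n) is the set of roots of x^(q^m) = x.\<close>

definition Fqm :: "nat \<Rightarrow> nat \<Rightarrow> 'a::{field,finite} set" where
  "Fqm q m = {x. x ^ (q ^ m) = x}"

definition is_prime_power :: "nat \<Rightarrow> bool" where
  "is_prime_power q \<longleftrightarrow> (\<exists>p e. prime p \<and> e > 0 \<and> q = p ^ e)"

definition primitive_elem :: "'a::{field,finite} \<Rightarrow> bool" where
  "primitive_elem a \<longleftrightarrow> (\<forall>x. x \<noteq> 0 \<longrightarrow> (\<exists>j::nat. a ^ j = x))"

definition span_Fq :: "nat \<Rightarrow> 'a::{field,finite} list \<Rightarrow> 'a set" where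
  "span_Fq q vs = {(\<Sum>i<length vs. c i * vs ! i) | c. \<forall>i. c i \<in> Fqm q 1}"

definition subspace_Fq :: "nat \<Rightarrow> 'a::{field,finite} set \<Rightarrow> bool" where
  "subspace_Fq q U \<longleftrightarrow> 0 \<in> U \<and> (\<forall>u\<in>U. \<forall>v\<in>U. u + v \<in> U)
      \<and> (\<forall>c\<in>Fqm q 1. \<forall>u\<in>U. c * u \<in> U)"

definition dim_Fq :: "nat \<Rightarrow> 'a::{field,finite} set \<Rightarrow> nat" where
  "dim_Fq q U = (LEAST d. \<exists>vs. length vs = d \<and> set vs \<subseteq> U \<and> span_Fq q vs = U)"

definition subsp_sum :: "'a::{field,finite} set \<Rightarrow> 'a set \<Rightarrow> 'a set" where
  "subsp_sum U V = {u + v | u v. u \<in> U \<and> v \<in> V}"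

definition subspace_dist :: "nat \<Rightarrow> 'a::{field,finite} set \<Rightarrow> 'a set \<Rightarrow> nat" where
  "subspace_dist q U V = dim_Fq q (subsp_sum U V) - dim_Fq q (U \<inter> V)"

definition flag_dist :: "nat \<Rightarrow> 'a::{field,finite} set list \<Rightarrow> 'a set list \<Rightarrow> nat" where
  "flag_dist q F G = (\<Sum>i<length F. subspace_dist q (F ! i) (G ! i))"

definition min_dist :: "('b \<Rightarrow> 'b \<Rightarrow> nat) \<Rightarrow> 'b set \<Rightarrow> nat" where
  "min_dist d C = (if card C \<le> 1 then 0
                   else Min {d x y | x y. x \<in> C \<and> y \<in> C \<and> x \<noteq> y})"

definition flag_orbit :: "'a::{field,finite} \<Rightarrow> 'a set list \<Rightarrow> 'a set list set" where
  "flag_orbit a F = {map (\<lambda>U. (\<lambda>x. x * a ^ j) ` U) F | j::nat. True}"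

text \<open>Projected codes, indexed 0..r-1 (i.e. C_{i+1} in the paper's numbering).\<close>

definition projected_code :: "'a set list set \<Rightarrow> nat \<Rightarrow> 'a set set" where
  "projected_code C i = {F ! i | F. F \<in> C}"

definition disjoint_code :: "nat \<Rightarrow> 'a set list set \<Rightarrow> bool" where
  "disjoint_code r C \<longleftrightarrow> (\<forall>i<r. card (projected_code C i) = card C)"

definition consistent_code :: "nat \<Rightarrow> nat \<Rightarrow> 'a::{field,finite} set list set \<Rightarrow> bool" where
  "consistent_code q r C \<longleftrightarrow> disjoint_code r C \<and>
     min_dist (flag_dist q) C = (\<Sum>i<r. min_dist (subspace_dist q) (projected_code C i))"

definition friend_subspace :: "nat \<Rightarrow> nat \<Rightarrow> nat \<Rightarrow> 'a::{field,finite} set \<Rightarrow> bool" where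
  "friend_subspace q n m U \<longleftrightarrow> m dvd n \<and> 0 \<in> U \<and> (\<forall>u\<in>U. \<forall>v\<in>U. u + v \<in> U)
      \<and> (\<forall>c\<in>Fqm q m. \<forall>u\<in>U. c * u \<in> U)"

definition friend_code :: "nat \<Rightarrow> nat \<Rightarrow> nat \<Rightarrow> 'a::{field,finite} set list set \<Rightarrow> bool" where
  "friend_code q n m C \<longleftrightarrow> m dvd n \<and> (\<forall>F\<in>C. \<forall>U\<in>set F. friend_subspace q n m U)"

definition best_friend_code :: "nat \<Rightarrow> nat \<Rightarrow> nat \<Rightarrow> 'a::{field,finite} set list set \<Rightarrow> bool" where
  "best_friend_code q n m C \<longleftrightarrow> friend_code q n m C \<and>
     (\<forall>m'. friend_code q n m' C \<longrightarrow> (Fqm q m' :: 'a set) \<subseteq> Fqm q m)"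

text \<open>The flag F^i: subspaces F_j = sum_{t<j} F_{q^{m_i}} beta^t for j = 1..L-1,
  where beta = alpha_{i+1} and L = m_{i+1}/m_i.\<close>

definition tower_flag :: "nat \<Rightarrow> nat \<Rightarrow> nat \<Rightarrow> 'a::{field,finite} \<Rightarrow> 'a set list" where
  "tower_flag q mi L beta =
     map (\<lambda>j. {(\<Sum>t<j. c t * beta ^ t) | c. \<forall>t. c t \<in> Fqm q mi}) [1..<L]"

end

theory Submission
  imports Defs "HOL-Number_Theory.Residues"
begin

definition subfld :: "'a::{field,finite} set \<Rightarrow> bool" where
  "subfld F \<longleftrightarrow> 0 \<in> F \<and> 1 \<in> F \<and> (\<forall>x\<in>F. \<forall>y\<in>F. x + y \<in> F \<and> x * y \<in> F \<and> x - y \<in> F)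
     \<and> (\<forall>x\<in>F. x \<noteq> 0 \<longrightarrow> inverse x \<in> F)"

definition Fclosed :: "'a::{field,finite} set \<Rightarrow> 'a set \<Rightarrow> bool" where
  "Fclosed F W \<longleftrightarrow> 0 \<in> W \<and> (\<forall>u\<in>W. \<forall>v\<in>W. u + v \<in> W) \<and> (\<forall>c\<in>F. \<forall>u\<in>W. c * u \<in> W)"

definition gspan :: "'a::{field,finite} set \<Rightarrow> nat \<Rightarrow> (nat \<Rightarrow> 'a) \<Rightarrow> 'a set" where
  "gspan F j f = {(\<Sum>t<j. c t * f t) | c. \<forall>t. c t \<in> F}"

lemma Fclosed_minus:
  assumes "subfld F" "Fclosed F W" "u \<in> W" "v \<in> W"
  shows "u - v \<in> W"
proof -
  have "(0 - 1) \<in> F" using assms(1) unfolding subfld_def by blast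
  hence "(0 - 1) * v \<in> W" using assms(2,4) unfolding Fclosed_def by blast
  hence "u + (0 - 1) * v \<in> W" using assms(2,3) unfolding Fclosed_def by blast
  thus ?thesis by simp
qed

lemma gspan_cong:
  assumes "\<And>t. t < j \<Longrightarrow> f t = g t" shows "gspan F j f = gspan F j g"
proof -
  have "\<And>c. (\<Sum>t<j. c t * f t) = (\<Sum>t<j. c t * g t)" by (intro sum.cong) (auto simp: assms)
  thus ?thesis unfolding gspan_def by simp
qed

lemma gspan_0: "subfld F \<Longrightarrow> gspan F 0 f = {0}"
  unfolding gspan_def subfld_def by auto

lemma gspan_Suc:
  assumes "subfld F"
  shows "gspan F (Suc j) f = {c * f j + x | c x. c \<in> F \<and> x \<in> gspan F j f}"
proof (intro Set.set_eqI iffI)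
  fix y assume "y \<in> gspan F (Suc j) f"
  then obtain c where c: "\<forall>t. c t \<in> F" "y = (\<Sum>t<Suc j. c t * f t)" unfolding gspan_def by blast
  hence "y = c j * f j + (\<Sum>t<j. c t * f t)" by simp
  moreover have "(\<Sum>t<j. c t * f t) \<in> gspan F j f" using c unfolding gspan_def by blast
  ultimately show "y \<in> {c * f j + x | c x. c \<in> F \<and> x \<in> gspan F j f}" using c by blast
next
  fix y assume "y \<in> {c * f j + x | c x. c \<in> F \<and> x \<in> gspan F j f}"
  then obtain a c where ac: "a \<in> F" "\<forall>t. c t \<in> F" "y = a * f j + (\<Sum>t<j. c t * f t)"
    unfolding gspan_def by blast
  define c' where "c' = c(j := a)"
  have "\<forall>t. c' t \<in> F" using ac unfolding c'_def by auto
  moreover have "(\<Sum>t<j. c' t * f t) = (\<Sum>t<j. c t * f t)"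
    unfolding c'_def by (intro sum.cong) auto
  ultimately have "y = (\<Sum>t<Suc j. c' t * f t)" using ac by (simp add: c'_def)
  thus "y \<in> gspan F (Suc j) f" unfolding gspan_def using \<open>\<forall>t. c' t \<in> F\<close> by blast
qed

lemma gspan_memI: "(\<And>t. c t \<in> F) \<Longrightarrow> x = (\<Sum>t<j. c t * f t) \<Longrightarrow> x \<in> gspan F j f"
  unfolding gspan_def by blast

lemma gspan_memE: "x \<in> gspan F j f \<Longrightarrow> (\<And>c. (\<And>t. c t \<in> F) \<Longrightarrow> x = (\<Sum>t<j. c t * f t) \<Longrightarrow> P) \<Longrightarrow> P"
  unfolding gspan_def by blast

lemma gspan_Fclosed:
  assumes "subfld F"
  shows "Fclosed F (gspan F j f)"
  unfolding Fclosed_def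
proof (intro conjI ballI)
  show "0 \<in> gspan F j f"
    by (rule gspan_memI[of "\<lambda>_. 0"]) (use assms in \<open>auto simp: subfld_def\<close>)
next
  fix u v assume u: "u \<in> gspan F j f" and v: "v \<in> gspan F j f"
  obtain c where c: "\<And>t. c t \<in> F" "u = (\<Sum>t<j. c t * f t)" by (rule gspan_memE[OF u]) blast
  obtain d where d: "\<And>t. d t \<in> F" "v = (\<Sum>t<j. d t * f t)" by (rule gspan_memE[OF v]) blast
  note cd = c d
  show "u + v \<in> gspan F j f"
  proof (rule gspan_memI[of "\<lambda>t. c t + d t"])
    show "c t + d t \<in> F" for t using cd(1)[of t] cd(3)[of t] assms unfolding subfld_def by blast
    show "u + v = (\<Sum>t<j. (c t + d t) * f t)" using cd by (simp add: sum.distrib distrib_right)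
  qed
next
  fix a u assume a: "a \<in> F" and u: "u \<in> gspan F j f"
  obtain c where c: "\<And>t. c t \<in> F" "u = (\<Sum>t<j. c t * f t)" by (rule gspan_memE[OF u]) blast
  show "a * u \<in> gspan F j f"
  proof (rule gspan_memI[of "\<lambda>t. a * c t"])
    show "a * c t \<in> F" for t using c(1)[of t] a assms unfolding subfld_def by blast
    show "a * u = (\<Sum>t<j. (a * c t) * f t)" using c by (simp add: sum_distrib_left mult.assoc)
  qed
qed

lemma gspan_sub:
  assumes "subfld F" "Fclosed F W" "\<And>t. t < j \<Longrightarrow> f t \<in> W"
  shows "gspan F j f \<subseteq> W"
  using assms(3)
proof (induction j)
  case 0 then show ?case using gspan_0[OF assms(1)] assms(2) unfolding Fclosed_def by auto
next
  case (Suc j)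
  have IH: "gspan F j f \<subseteq> W" using Suc by auto
  have fj: "f j \<in> W" using Suc by auto
  show ?case unfolding gspan_Suc[OF assms(1)] using IH fj assms(2) unfolding Fclosed_def by blast
qed

lemma coset_card:
  assumes "subfld F" "Fclosed F W" "u \<notin> W"
  shows "card {c * u + x | c x. c \<in> F \<and> x \<in> W} = card F * card W"
proof -
  have eq: "{c * u + x | c x. c \<in> F \<and> x \<in> W} = (\<lambda>(c, x). c * u + x) ` (F \<times> W)" by auto
  have key: "c = c' \<and> x = x'" if h: "c \<in> F" "x \<in> W" "c' \<in> F" "x' \<in> W" "c * u + x = c' * u + x'"
    for c x c' x'
  proof -
    have "c = c'"
    proof (rule ccontr)
      assume ne: "c \<noteq> c'"
      have d: "c - c' \<in> F" using h(1,3) assms(1) unfolding subfld_def by simp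
      have i: "inverse (c - c') \<in> F" using d ne assms(1) unfolding subfld_def by simp
      have w: "x' - x \<in> W" using Fclosed_minus[OF assms(1,2) h(4) h(2)] .
      have iw: "inverse (c - c') * (x' - x) \<in> W" using i w assms(2) unfolding Fclosed_def by simp
      have "(c - c') * u = x' - x" using h(5) by (simp add: algebra_simps)
      moreover have "inverse (c - c') * ((c - c') * u) = u" using ne by (simp add: mult.assoc[symmetric])
      ultimately have "inverse (c - c') * (x' - x) = u" by simp
      thus False using iw assms(3) by simp
    qed
    with h(5) show ?thesis by simp
  qed
  have "inj_on (\<lambda>(c, x). c * u + x) (F \<times> W)"
    by (rule inj_onI) (use key in auto)
  thus ?thesis unfolding eq by (simp add: card_image card_cartesian_product)
qed

lemma gspan_card_le:
  assumes "subfld F"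
  shows "card (gspan F j f) \<le> card F ^ j"
proof (induction j)
  case 0 then show ?case using gspan_0[OF assms] by simp
next
  case (Suc j)
  have "gspan F (Suc j) f = (\<lambda>(c, x). c * f j + x) ` (F \<times> gspan F j f)"
    unfolding gspan_Suc[OF assms] by auto
  hence "card (gspan F (Suc j) f) \<le> card (F \<times> gspan F j f)"
    by (simp only:) (rule card_image_le, simp)
  also have "\<dots> = card F * card (gspan F j f)" by (simp add: card_cartesian_product)
  also have "\<dots> \<le> card F * card F ^ j" using Suc by simp
  finally show ?case by simp
qed

lemma card_subfld_ge2: "subfld F \<Longrightarrow> 2 \<le> card F"
proof -
  assume "subfld F"
  hence "{0, 1} \<subseteq> F" unfolding subfld_def by auto
  hence "card {0, (1::'a)} \<le> card F" by (intro card_mono) auto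
  thus ?thesis by simp
qed

lemma greedy_aux:
  assumes "subfld F" "Fclosed F W"
  shows "(\<And>t. t < j \<Longrightarrow> f t \<in> W) \<Longrightarrow> card (gspan F j f) = card F ^ j \<Longrightarrow>
    \<exists>g j'. (\<forall>t<j'. g t \<in> W) \<and> gspan F j' g = W \<and> card W = card F ^ j'"
proof (induction "card W - card (gspan F j f)" arbitrary: j f rule: less_induct)
  case less
  have sub: "gspan F j f \<subseteq> W" using gspan_sub[OF assms] less.prems by blast
  show ?case
  proof (cases "gspan F j f = W")
    case True then show ?thesis using less.prems by (intro exI[of _ f] exI[of _ j]) auto
  next
    case False
    then obtain u where u: "u \<in> W" "u \<notin> gspan F j f" using sub by blast
    define f' where "f' = f(j := u)"
    have same: "gspan F j f' = gspan F j f" unfolding f'_def by (rule gspan_cong) simp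
    have f'W: "\<And>t. t < Suc j \<Longrightarrow> f' t \<in> W" using less.prems u unfolding f'_def
      by (auto simp: less_Suc_eq)
    have "card (gspan F (Suc j) f') = card F * card (gspan F j f)"
      unfolding gspan_Suc[OF assms(1)] same using coset_card[OF assms(1) gspan_Fclosed[OF assms(1)] u(2)]
      by (simp add: f'_def)
    hence c2: "card (gspan F (Suc j) f') = card F ^ Suc j" using less.prems by simp
    have "card (gspan F j f) < card (gspan F (Suc j) f')"
      using c2 less.prems card_subfld_ge2[OF assms(1)] by simp
    moreover have "card (gspan F (Suc j) f') \<le> card W"
      using gspan_sub[OF assms f'W] by (simp add: card_mono)
    ultimately have "card W - card (gspan F (Suc j) f') < card W - card (gspan F j f)" by simp
    from less.hyps[OF this f'W c2] show ?thesis .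
  qed
qed

lemma greedy:
  assumes "subfld F" "Fclosed F W"
  shows "\<exists>g j. (\<forall>t<j. g t \<in> W) \<and> gspan F j g = W \<and> card W = card F ^ j"
  using greedy_aux[OF assms, of 0 undefined] gspan_0[OF assms(1)] by simp

lemma span_Fq_gspan: "span_Fq q vs = gspan (Fqm q 1) (length vs) (\<lambda>i. vs ! i)"
  unfolding span_Fq_def gspan_def by simp

lemma dim_Fq_card:
  fixes W :: "'a::{field,finite} set"
  assumes "subfld (Fqm q 1 :: 'a::{field,finite} set)" "card (Fqm q 1 :: 'a set) = q"
    "Fclosed (Fqm q 1) W" "card W = q ^ d"
  shows "dim_Fq q W = d"
proof -
  have q2: "2 \<le> q" using card_subfld_ge2[OF assms(1)] assms(2) by simp
  obtain g j where g: "\<forall>t<j. g t \<in> W" "gspan (Fqm q 1) j g = W" "card W = q ^ j"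
    using greedy[OF assms(1,3)] assms(2) by metis
  have jd: "j = d" using g(3) assms(4) q2 by (simp add: power_inject_exp)
  define vs where "vs = map g [0..<d]"
  have "gspan (Fqm q 1) d (\<lambda>i. vs ! i) = gspan (Fqm q 1) d g"
    by (rule gspan_cong) (simp add: vs_def)
  hence "span_Fq q vs = W" unfolding span_Fq_gspan using g(2) jd by (simp add: vs_def)
  moreover have "set vs \<subseteq> W" unfolding vs_def using g(1) jd by auto
  moreover have "length vs = d" unfolding vs_def by simp
  moreover have "\<And>e. (\<exists>vs. length vs = e \<and> set vs \<subseteq> W \<and> span_Fq q vs = W) \<Longrightarrow> d \<le> e"
  proof -
    fix e assume "\<exists>vs. length vs = e \<and> set vs \<subseteq> W \<and> span_Fq q vs = W"
    then obtain ws where "length ws = e" "span_Fq q ws = W" by blast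
    hence "card W \<le> q ^ e" using gspan_card_le[OF assms(1), of "length ws" "\<lambda>i. ws ! i"] assms(2)
      unfolding span_Fq_gspan by simp
    thus "d \<le> e" using assms(4) q2 by (simp add: power_le_imp_le_exp)
  qed
  ultimately show ?thesis unfolding dim_Fq_def by (intro Least_equality) blast+
qed

lemma dvd_pow_minus1:
  fixes a :: nat assumes "1 \<le> a" shows "(a - 1) dvd (a ^ c - 1)"
proof (induction c)
  case 0 then show ?case by simp
next
  case (Suc c)
  have "1 \<le> a ^ c" using assms by simp
  hence "a ^ Suc c - 1 = a * (a ^ c - 1) + (a - 1)" using assms
    by (simp add: algebra_simps diff_mult_distrib2)
  thus ?case using Suc by (simp add: dvd_add)
qed

lemma dvd_qpow_minus1:
  fixes q :: nat assumes "1 \<le> q" "d dvd n" shows "(q ^ d - 1) dvd (q ^ n - 1)"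
proof -
  obtain c where "n = d * c" using assms(2) by blast
  hence "q ^ n = (q ^ d) ^ c" by (simp add: power_mult)
  thus ?thesis using dvd_pow_minus1[of "q ^ d" c] assms(1) by simp
qed

lemma field_pow_card:
  fixes x :: "'a :: {field,finite}"
  shows "x ^ card (UNIV :: 'a set) = x"
proof (cases "x = 0")
  case False
  have "x * (\<Prod>y\<in>UNIV-{0}. x * y) = x * x ^ (card (UNIV :: 'a set) - 1) * \<Prod>(UNIV-{0})"
    by (simp add: prod.distrib mult_ac)
  also have "x * x ^ (card (UNIV :: 'a set) - 1) = x ^ Suc (card (UNIV :: 'a set) - 1)"
    by (subst power_Suc) auto
  also have "Suc (card (UNIV :: 'a set) - 1) = card (UNIV :: 'a set)"
    using finite_UNIV_card_ge_0[where ?'a = 'a] by simp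
  also have "(\<Prod>y\<in>UNIV-{0}. x * y) = (\<Prod>y\<in>UNIV-{0}. y)"
    by (rule prod.reindex_bij_witness[of _ "\<lambda>y. y / x" "\<lambda>y. x * y"]) (use False in auto)
  finally show ?thesis
    by simp
qed (use finite_UNIV_card_ge_0[where ?'a = 'a] in auto)

locale ffctx =
  fixes q n :: nat and \<alpha> :: "'a::{field,finite}"
  assumes qpp: "is_prime_power q"
    and cardU: "card (UNIV :: 'a set) = q ^ n"
    and n2: "2 \<le> n"
    and prim: "primitive_elem \<alpha>"
begin

definition T where "T = q ^ n - 1"

lemma q2: "2 \<le> q"
proof -
  obtain p e where "prime p" "e > 0" "q = p ^ e" using qpp unfolding is_prime_power_def by blast
  hence "p \<le> q" using self_le_power[of p e] prime_gt_0_nat[of p] by simp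
  thus ?thesis using prime_ge_2_nat[OF \<open>prime p\<close>] by simp
qed

lemma qn_ge4: "4 \<le> q ^ n"
proof -
  have "q ^ 2 \<le> q ^ n" using n2 q2 by (intro power_increasing) auto
  moreover have "4 \<le> q ^ 2" using mult_le_mono[OF q2 q2] by (simp add: power2_eq_square)
  ultimately show ?thesis by simp
qed

lemma T_pos: "1 \<le> T" using qn_ge4 unfolding T_def by simp

lemma alpha_ne0: "\<alpha> \<noteq> 0"
proof
  assume a0: "\<alpha> = 0"
  have "card {0, 1 :: 'a} < card (UNIV :: 'a set)" using qn_ge4 cardU by simp
  have "UNIV \<noteq> {0, 1 :: 'a}"
  proof
    assume h: "UNIV = {0, 1 :: 'a}"
    have "card (UNIV :: 'a set) = 2" unfolding h by simp
    thus False using \<open>card {0, 1 :: 'a} < card (UNIV :: 'a set)\<close> by simp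
  qed
  then obtain x :: 'a where "x \<notin> {0, 1}" by blast
  then obtain j where "\<alpha> ^ j = x" using prim unfolding primitive_elem_def by auto
  thus False using a0 \<open>x \<notin> {0,1}\<close> by (cases j) auto
qed

lemma alpha_T: "\<alpha> ^ T = 1"
proof -
  have "Suc T = card (UNIV :: 'a set)" using cardU qn_ge4 unfolding T_def by simp
  hence "\<alpha> ^ Suc T = \<alpha>" using field_pow_card[of \<alpha>] by simp
  hence "\<alpha> * \<alpha> ^ T = \<alpha> * 1" by simp
  thus ?thesis using alpha_ne0 by simp
qed

lemma alpha_pow_mod: "\<alpha> ^ a = \<alpha> ^ (a mod T)"
proof -
  have "\<alpha> ^ a = \<alpha> ^ (T * (a div T) + a mod T)" by simp
  also have "\<dots> = (\<alpha> ^ T) ^ (a div T) * \<alpha> ^ (a mod T)" by (simp only: power_add power_mult)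
  finally show ?thesis using alpha_T by simp
qed

lemma alpha_image: "(\<lambda>s. \<alpha> ^ s) ` {..<T} = UNIV - {0}"
proof
  show "(\<lambda>s. \<alpha> ^ s) ` {..<T} \<subseteq> UNIV - {0}" using alpha_ne0 by auto
  show "UNIV - {0} \<subseteq> (\<lambda>s. \<alpha> ^ s) ` {..<T}"
  proof
    fix x :: 'a assume "x \<in> UNIV - {0}"
    then obtain j where "\<alpha> ^ j = x" using prim unfolding primitive_elem_def by auto
    hence "\<alpha> ^ (j mod T) = x" using alpha_pow_mod by simp
    moreover have "j mod T < T" using T_pos by simp
    ultimately show "x \<in> (\<lambda>s. \<alpha> ^ s) ` {..<T}" by blast
  qed
qed

lemma alpha_inj: "inj_on (\<lambda>s. \<alpha> ^ s) {..<T}"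
proof (rule eq_card_imp_inj_on)
  have "card (UNIV - {0 :: 'a}) = T" using cardU unfolding T_def by (simp add: card_Diff_singleton)
  thus "card ((\<lambda>s. \<alpha> ^ s) ` {..<T}) = card {..<T}" using alpha_image by simp
qed simp

lemma alpha_eq1: "\<alpha> ^ a = 1 \<longleftrightarrow> T dvd a"
proof
  assume "\<alpha> ^ a = 1"
  hence "\<alpha> ^ (a mod T) = \<alpha> ^ 0" using alpha_pow_mod by simp
  moreover have "a mod T < T" "0 < T" using T_pos by auto
  ultimately have "a mod T = 0" using alpha_inj unfolding inj_on_def by blast
  thus "T dvd a" by auto
next
  assume "T dvd a" then obtain c where "a = T * c" by blast
  thus "\<alpha> ^ a = 1" by (simp add: power_mult alpha_T)
qed

lemma CHAR_q: "\<exists>e. q = CHAR('a) ^ e"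
proof -
  obtain p e where pe: "prime p" "e > 0" "q = p ^ e" using qpp unfolding is_prime_power_def by blast
  have cp: "CHAR('a) > 0" by (rule finite_imp_CHAR_pos) simp
  have pc: "prime CHAR('a)" using prime_CHAR_semidom[OF cp] .
  have "CHAR('a) dvd p ^ (e * n)" using CHAR_dvd_CARD[where ?'a='a] cardU pe by (simp add: power_mult)
  hence "CHAR('a) dvd p" using pc prime_dvd_power by blast
  hence "CHAR('a) = p" using pc pe(1) by (simp add: primes_dvd_imp_eq)
  thus ?thesis using pe by blast
qed

lemma frob_add: "((x::'a) + y) ^ (q ^ d) = x ^ (q ^ d) + y ^ (q ^ d)"
proof -
  obtain e where e: "q = CHAR('a) ^ e" using CHAR_q by blast
  have cp: "CHAR('a) > 0" by (rule finite_imp_CHAR_pos) simp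
  have pc: "prime CHAR('a)" using prime_CHAR_semidom[OF cp] .
  have "q ^ d = CHAR('a) ^ (e * d)" using e by (simp add: power_mult)
  thus ?thesis using freshmans_dream'[OF pc] by blast
qed

lemma subfld_Fqm: "subfld (Fqm q d :: 'a set)"
proof -
  have Q: "0 < q ^ d" using q2 by simp
  have add: "x + y \<in> Fqm q d" if "x \<in> Fqm q d" "y \<in> Fqm q d" for x y :: 'a
    using that frob_add unfolding Fqm_def by simp
  have mul: "x * y \<in> Fqm q d" if "x \<in> Fqm q d" "y \<in> Fqm q d" for x y :: 'a
    using that unfolding Fqm_def by (simp add: power_mult_distrib)
  have sub: "x - y \<in> Fqm q d" if "x \<in> Fqm q d" "y \<in> Fqm q d" for x y :: 'a
  proof -
    have "x ^ (q ^ d) = (x - y) ^ (q ^ d) + y ^ (q ^ d)" using frob_add[of "x - y" y d] by simp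
    thus ?thesis using that unfolding Fqm_def by (simp add: algebra_simps)
  qed
  have inv: "inverse x \<in> Fqm q d" if "x \<in> Fqm q d" for x :: 'a
    using that unfolding Fqm_def by (simp add: power_inverse)
  show ?thesis unfolding subfld_def using add mul sub inv Q unfolding Fqm_def by simp
qed

lemma Fqm_mono: assumes "a dvd b" shows "Fqm q a \<subseteq> (Fqm q b :: 'a set)"
proof
  fix x :: 'a assume x: "x \<in> Fqm q a"
  obtain c where b: "b = a * c" using assms by blast
  have "x ^ (q ^ (a * c)) = x"
  proof (induction c)
    case 0 then show ?case by simp
  next
    case (Suc c)
    have "x ^ (q ^ (a * Suc c)) = (x ^ (q ^ (a * c))) ^ (q ^ a)"
      by (simp add: power_add power_mult[symmetric] mult.commute)
    thus ?case using Suc x unfolding Fqm_def by simp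
  qed
  thus "x \<in> Fqm q b" unfolding Fqm_def b by simp
qed

lemma Fqm_nonzero:
  assumes "1 \<le> d" "d dvd n" "N = T div (q ^ d - 1)"
  shows "Fqm q d - {0} = (\<lambda>s. \<alpha> ^ (N * s)) ` {..<q ^ d - 1}"
proof -
  have Qd: "2 \<le> q ^ d" using power_increasing[of 1 d q] q2 assms(1) by simp
  have dv: "(q ^ d - 1) dvd T" unfolding T_def using dvd_qpow_minus1[OF _ assms(2)] q2 by simp
  hence NT: "N * (q ^ d - 1) = T" unfolding assms(3) by simp
  have Npos: "N > 0" using NT T_pos by (cases N) auto
  show ?thesis
  proof (rule Set.set_eqI, rule iffI)
    fix x :: 'a assume x: "x \<in> Fqm q d - {0}"
    have "x \<in> (\<lambda>s. \<alpha> ^ s) ` {..<T}" using x alpha_image by auto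
    then obtain s where s: "s < T" "\<alpha> ^ s = x" by blast
    have "x ^ (q ^ d) = x" using x unfolding Fqm_def by simp
    hence "x ^ (q ^ d - 1) * x = 1 * x" using Qd q2 power_minus_mult[of "q ^ d" x] by simp
    hence "x ^ (q ^ d - 1) = 1" using x by simp
    hence "\<alpha> ^ (s * (q ^ d - 1)) = 1" using s by (simp add: power_mult)
    hence "T dvd s * (q ^ d - 1)" using alpha_eq1 by simp
    hence "N * (q ^ d - 1) dvd s * (q ^ d - 1)" using NT by simp
    hence "N dvd s" using Qd dvd_mult_cancel_right[of N "q ^ d - 1" s] by simp
    then obtain s' where s': "s = N * s'" by blast
    have "N * s' < N * (q ^ d - 1)" using s(1) s' NT by simp
    hence "s' < q ^ d - 1" by simp
    thus "x \<in> (\<lambda>s. \<alpha> ^ (N * s)) ` {..<q ^ d - 1}" using s s' by blast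
  next
    fix x :: 'a assume "x \<in> (\<lambda>s. \<alpha> ^ (N * s)) ` {..<q ^ d - 1}"
    then obtain s where s: "s < q ^ d - 1" "x = \<alpha> ^ (N * s)" by blast
    have "x \<noteq> 0" using s alpha_ne0 by simp
    have "x ^ (q ^ d) = x ^ (q ^ d - 1) * x" using Qd q2 power_minus_mult[of "q ^ d" x] by simp
    also have "x ^ (q ^ d - 1) = (\<alpha> ^ (N * (q ^ d - 1))) ^ s" using s
      by (simp add: power_mult[symmetric] mult_ac)
    also have "\<dots> = 1" using NT alpha_T by simp
    finally have "x ^ (q ^ d) = x" by simp
    thus "x \<in> Fqm q d - {0}" using \<open>x \<noteq> 0\<close> unfolding Fqm_def by simp
  qed
qed

lemma card_Fqm:
  assumes "1 \<le> d" "d dvd n"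
  shows "card (Fqm q d :: 'a set) = q ^ d"
proof -
  define N where "N = T div (q ^ d - 1)"
  have Qd: "2 \<le> q ^ d" using power_increasing[of 1 d q] q2 assms(1) by simp
  have dv: "(q ^ d - 1) dvd T" unfolding T_def using dvd_qpow_minus1[OF _ assms(2)] q2 by simp
  hence NT: "N * (q ^ d - 1) = T" unfolding N_def by simp
  have inj: "inj_on (\<lambda>s. \<alpha> ^ (N * s)) {..<q ^ d - 1}"
  proof (rule inj_onI)
    fix s t assume st: "s \<in> {..<q ^ d - 1}" "t \<in> {..<q ^ d - 1}" "\<alpha> ^ (N * s) = \<alpha> ^ (N * t)"
    have Np: "N > 0" using NT T_pos by (cases N) auto
    have a1: "N * s < N * (q ^ d - 1)" using st Np by simp
    have a2: "N * t < N * (q ^ d - 1)" using st Np by simp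
    have "N * s < T" "N * t < T" using a1 a2 unfolding NT by auto
    hence "N * s = N * t" using alpha_inj st(3) unfolding inj_on_def by blast
    thus "s = t" using Np by simp
  qed
  have "card (Fqm q d - {0 :: 'a}) = q ^ d - 1"
    using Fqm_nonzero[OF assms N_def] card_image[OF inj] by simp
  moreover have "(0::'a) \<in> Fqm q d" unfolding Fqm_def using q2 by simp
  ultimately show ?thesis using Qd by (simp add: card_Diff_singleton)
qed

end

definition img :: "'a::{field,finite} \<Rightarrow> 'a set \<Rightarrow> 'a set" where
  "img y U = (\<lambda>v. v * y) ` U"

lemma gspan_mult_right:
  assumes "x \<in> gspan F j f" shows "x * y \<in> gspan F j (\<lambda>t. f t * y)"
proof -
  obtain c where c: "\<And>t. c t \<in> F" "x = (\<Sum>t<j. c t * f t)" by (rule gspan_memE[OF assms]) blast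
  show ?thesis
  proof (rule gspan_memI[of c])
    show "c t \<in> F" for t using c(1) .
    show "x * y = (\<Sum>t<j. c t * (f t * y))" using c(2) by (simp add: sum_distrib_right mult.assoc)
  qed
qed

lemma Fclosed_img: "Fclosed F U \<Longrightarrow> Fclosed F (img y U)"
  unfolding Fclosed_def img_def
proof (intro conjI ballI)
  assume h: "0 \<in> U \<and> (\<forall>u\<in>U. \<forall>v\<in>U. u + v \<in> U) \<and> (\<forall>c\<in>F. \<forall>u\<in>U. c * u \<in> U)"
  show "0 \<in> (\<lambda>v. v * y) ` U" using h by (intro image_eqI[of _ _ 0]) auto
  fix u v assume "u \<in> (\<lambda>v. v * y) ` U" "v \<in> (\<lambda>v. v * y) ` U"
  then obtain u' v' where "u' \<in> U" "v' \<in> U" "u = u' * y" "v = v' * y" by blast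
  thus "u + v \<in> (\<lambda>v. v * y) ` U" using h by (intro image_eqI[of _ _ "u' + v'"]) (auto simp: distrib_right)
next
  assume h: "0 \<in> U \<and> (\<forall>u\<in>U. \<forall>v\<in>U. u + v \<in> U) \<and> (\<forall>c\<in>F. \<forall>u\<in>U. c * u \<in> U)"
  fix c u assume "c \<in> F" "u \<in> (\<lambda>v. v * y) ` U"
  then obtain u' where "u' \<in> U" "u = u' * y" by blast
  thus "c * u \<in> (\<lambda>v. v * y) ` U" using h \<open>c \<in> F\<close> by (intro image_eqI[of _ _ "c * u'"]) (auto simp: mult.assoc)
qed

lemma card_img: "y \<noteq> 0 \<Longrightarrow> card (img y U) = card U"
  unfolding img_def by (rule card_image) (auto simp: inj_on_def)

lemma img_img: "img b (img a U) = img (a * b) U"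
  unfolding img_def image_image by (simp add: mult.assoc)

lemma img_1: "img 1 U = U"
  unfolding img_def by simp

lemma img_fixed:
  assumes "Fclosed F U" "x \<in> F" "x \<noteq> 0" shows "img x U = U"
proof -
  have "img x U \<subseteq> U" using assms unfolding img_def Fclosed_def by (auto simp: mult.commute)
  moreover have "card (img x U) = card U" using card_img[OF assms(3)] .
  ultimately show ?thesis by (simp add: card_subset_eq)
qed

lemma Fclosed_mono: "Fclosed A W \<Longrightarrow> K \<subseteq> A \<Longrightarrow> Fclosed K W"
  unfolding Fclosed_def by blast

lemma Fclosed_Int: "Fclosed F U \<Longrightarrow> Fclosed F W \<Longrightarrow> Fclosed F (U \<inter> W)"
  unfolding Fclosed_def by blast

lemma Fclosed_sum:
  assumes "Fclosed F U" "Fclosed F W" shows "Fclosed F (subsp_sum U W)"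
  unfolding Fclosed_def subsp_sum_def
proof (intro conjI ballI)
  show "0 \<in> {u + v |u v. u \<in> U \<and> v \<in> W}" using assms unfolding Fclosed_def by force
next
  fix a b assume "a \<in> {u + v |u v. u \<in> U \<and> v \<in> W}" "b \<in> {u + v |u v. u \<in> U \<and> v \<in> W}"
  then obtain u v u' v' where h: "u \<in> U" "v \<in> W" "u' \<in> U" "v' \<in> W" "a = u + v" "b = u' + v'" by blast
  have "a + b = (u + u') + (v + v')" using h by (simp add: algebra_simps)
  moreover have "u + u' \<in> U" "v + v' \<in> W" using h assms unfolding Fclosed_def by blast+
  ultimately show "a + b \<in> {u + v |u v. u \<in> U \<and> v \<in> W}" by blast
next
  fix c a assume c: "c \<in> F" and "a \<in> {u + v |u v. u \<in> U \<and> v \<in> W}"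
  then obtain u v where h: "u \<in> U" "v \<in> W" "a = u + v" by blast
  have "c * a = c * u + c * v" using h by (simp add: algebra_simps)
  moreover have "c * u \<in> U" "c * v \<in> W" using h c assms unfolding Fclosed_def by blast+
  ultimately show "c * a \<in> {u + v |u v. u \<in> U \<and> v \<in> W}" by blast
qed

lemma subsp_sum_sub:
  assumes "Fclosed F X" "U \<subseteq> X" "W \<subseteq> X" shows "subsp_sum U W \<subseteq> X"
  using assms unfolding subsp_sum_def Fclosed_def by blast

lemma coset_le:
  assumes "subfld F" "Fclosed F W" "Fclosed F U" "W \<subseteq> U" "W \<noteq> U"
  shows "card F * card W \<le> card U"
proof -
  obtain u where u: "u \<in> U" "u \<notin> W" using assms(4,5) by blast
  have "{c * u + x | c x. c \<in> F \<and> x \<in> W} \<subseteq> U" using u assms(2,3,4) unfolding Fclosed_def by blast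
  hence "card {c * u + x | c x. c \<in> F \<and> x \<in> W} \<le> card U" by (simp add: card_mono)
  thus ?thesis using coset_card[OF assms(1,2) u(2)] by simp
qed

locale tower = ffctx q n \<alpha> for q n :: nat and \<alpha> :: "'a::{field,finite}" +
  fixes mi M :: nat
  assumes mi_pos: "0 < mi" and mi_lt: "mi < M" and mi_dvd: "mi dvd M" and M_dvd: "M dvd n"
begin

definition L where "L = M div mi"
definition N where "N = T div (q ^ M - 1)"
definition \<beta> where "\<beta> = \<alpha> ^ N"
definition K :: "'a set" where "K = Fqm q mi"
definition V where "V j = gspan K j (\<lambda>t. \<beta> ^ t)"

lemma L_facts: "2 \<le> L" "mi * L = M"
proof -
  show "mi * L = M" unfolding L_def using mi_dvd by simp
  hence "mi * 1 < mi * L" using mi_lt by simp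
  hence "1 < L" using mult_less_cancel1 by blast
  thus "2 \<le> L" by simp
qed

lemma M_pos: "1 \<le> M" using mi_lt by simp

lemma subK: "subfld K" unfolding K_def by (rule subfld_Fqm)

lemma cardK: "card K = q ^ mi"
  unfolding K_def using card_Fqm[of mi] mi_pos mi_dvd M_dvd dvd_trans by auto

lemma subFq: "subfld (Fqm q 1 :: 'a set)" by (rule subfld_Fqm)

lemma cardFq: "card (Fqm q 1 :: 'a set) = q" using card_Fqm[of 1] by simp

lemma Fq_sub_K: "Fqm q 1 \<subseteq> K" unfolding K_def by (rule Fqm_mono) simp

lemma K_ge2: "2 \<le> card K" using card_subfld_ge2[OF subK] .

lemma NT: "N * (q ^ M - 1) = T"
proof -
  have "(q ^ M - 1) dvd T" unfolding T_def using dvd_qpow_minus1[OF _ M_dvd] q2 by simp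
  thus ?thesis unfolding N_def by simp
qed

lemma QM: "2 \<le> q ^ M" using power_increasing[of 1 M q] q2 M_pos by simp

lemma beta_ne0: "\<beta> \<noteq> 0" unfolding \<beta>_def using alpha_ne0 by simp

lemma beta_inj: "inj_on (\<lambda>r. \<beta> ^ r) {..<q ^ M - 1}"
proof (rule inj_onI)
  fix s t assume st: "s \<in> {..<q ^ M - 1}" "t \<in> {..<q ^ M - 1}" "\<beta> ^ s = \<beta> ^ t"
  have Np: "N > 0" using NT T_pos by (cases N) auto
  have a1: "N * s < N * (q ^ M - 1)" using st Np by simp
  have a2: "N * t < N * (q ^ M - 1)" using st Np by simp
  have "N * s < T" "N * t < T" using a1 a2 unfolding NT by auto
  moreover have "\<alpha> ^ (N * s) = \<alpha> ^ (N * t)" using st(3) unfolding \<beta>_def by (simp add: power_mult)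
  ultimately have "N * s = N * t" using alpha_inj unfolding inj_on_def by blast
  thus "s = t" using Np by simp
qed

lemma V_Fclosed: "Fclosed K (V j)" unfolding V_def by (rule gspan_Fclosed[OF subK])

lemma V_basis: "t < j \<Longrightarrow> \<beta> ^ t \<in> V j"
  unfolding V_def
proof (rule gspan_memI[of "\<lambda>s. if s = t then 1 else 0"])
  assume "t < j"
  show "(if s = t then 1 else 0) \<in> K" for s using subK unfolding subfld_def by simp
  have "(\<Sum>s<j. (if s = t then 1 else 0) * \<beta> ^ s) = (\<Sum>s<j. if s = t then \<beta> ^ s else 0)"
    by (intro sum.cong) auto
  also have "\<dots> = \<beta> ^ t" using \<open>t < j\<close> by simp
  finally show "\<beta> ^ t = (\<Sum>s<j. (if s = t then 1 else 0) * \<beta> ^ s)" by simp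
qed

lemma V_0: "V 0 = {0}" unfolding V_def using gspan_0[OF subK] .

lemma V_mono: "j \<le> j' \<Longrightarrow> V j \<subseteq> V j'"
  unfolding V_def by (rule gspan_sub[OF subK V_Fclosed[unfolded V_def]]) (use V_basis[unfolded V_def] in auto)

lemma V_shift: "x \<in> V j \<Longrightarrow> x * \<beta> \<in> V (Suc j)"
proof -
  assume "x \<in> V j"
  hence "x * \<beta> \<in> gspan K j (\<lambda>t. \<beta> ^ t * \<beta>)" unfolding V_def by (rule gspan_mult_right)
  moreover have "gspan K j (\<lambda>t. \<beta> ^ t * \<beta>) \<subseteq> V (Suc j)"
  proof (rule gspan_sub[OF subK V_Fclosed])
    fix t assume "t < j"
    thus "\<beta> ^ t * \<beta> \<in> V (Suc j)" using V_basis[of "Suc t" "Suc j"] by (simp add: mult.commute)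
  qed
  ultimately show ?thesis by blast
qed

lemma V_card_le: "card (V j) \<le> q ^ (mi * j)"
  using gspan_card_le[OF subK, of j "\<lambda>t. \<beta> ^ t"] cardK unfolding V_def by (simp add: power_mult)

lemma indep: assumes "j < L" shows "\<beta> ^ j \<notin> V j"
proof
  assume bj: "\<beta> ^ j \<in> V j"
  have j1: "1 \<le> j"
  proof (rule ccontr)
    assume "\<not> 1 \<le> j" hence "j = 0" by simp
    thus False using bj V_0 by simp
  qed
  have clos: "x * \<beta> \<in> V j" if "x \<in> V j" for x
  proof -
    have "x * \<beta> \<in> gspan K j (\<lambda>t. \<beta> ^ t * \<beta>)" using that unfolding V_def by (rule gspan_mult_right)
    moreover have "gspan K j (\<lambda>t. \<beta> ^ t * \<beta>) \<subseteq> V j"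
    proof (rule gspan_sub[OF subK V_Fclosed])
      fix t assume t: "t < j"
      show "\<beta> ^ t * \<beta> \<in> V j"
      proof (cases "Suc t = j")
        case True then show ?thesis using bj by (simp only: power_Suc2[symmetric] True)
      next
        case False then show ?thesis using V_basis[of "Suc t" j] t by (simp add: mult.commute)
      qed
    qed
    ultimately show ?thesis by blast
  qed
  have allr: "\<beta> ^ r \<in> V j" for r
  proof (induction r)
    case 0 then show ?case using V_basis[of 0 j] j1 by simp
  next
    case (Suc r) then show ?case using clos[of "\<beta> ^ r"] by (simp add: mult.commute)
  qed
  have sub: "insert 0 ((\<lambda>r. \<beta> ^ r) ` {..<q ^ M - 1}) \<subseteq> V j"
    using allr V_Fclosed[of j] unfolding Fclosed_def by auto
  have "0 \<notin> (\<lambda>r. \<beta> ^ r) ` {..<q ^ M - 1}" using beta_ne0 by auto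
  hence "card (insert 0 ((\<lambda>r. \<beta> ^ r) ` {..<q ^ M - 1})) = q ^ M"
    using card_image[OF beta_inj] QM by simp
  hence "q ^ M \<le> card (V j)" using sub by (metis card_mono finite)
  also have "\<dots> \<le> q ^ (mi * j)" by (rule V_card_le)
  also have "\<dots> < q ^ M"
  proof -
    have "mi * j < mi * L" using assms mi_pos by simp
    thus ?thesis using L_facts(2) q2 by (intro power_strict_increasing) auto
  qed
  finally show False by simp
qed

lemma card_V: "j \<le> L \<Longrightarrow> card (V j) = card K ^ j"
proof (induction j)
  case 0 then show ?case using V_0 by simp
next
  case (Suc j)
  have "V (Suc j) = {c * \<beta> ^ j + x | c x. c \<in> K \<and> x \<in> V j}"
    unfolding V_def by (rule gspan_Suc[OF subK])
  moreover have "\<beta> ^ j \<notin> V j" using indep Suc by simp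
  ultimately have "card (V (Suc j)) = card K * card (V j)"
    using coset_card[OF subK V_Fclosed] by simp
  thus ?case using Suc by simp
qed

lemma one_in_V: "1 \<le> j \<Longrightarrow> 1 \<in> V j" using V_basis[of 0 j] by simp

lemma V_1: "V 1 = K"
proof -
  have "V 1 = {c * \<beta> ^ 0 + x | c x. c \<in> K \<and> x \<in> V 0}"
    unfolding V_def using gspan_Suc[OF subK, of 0 "\<lambda>t. \<beta> ^ t"] by simp
  thus ?thesis unfolding V_0 by auto
qed

end

lemma min_dist_eqI:
  assumes "finite C" "x0 \<in> C" "y0 \<in> C" "x0 \<noteq> y0" "d x0 y0 = v"
    and "\<And>x y. x \<in> C \<Longrightarrow> y \<in> C \<Longrightarrow> x \<noteq> y \<Longrightarrow> v \<le> d x y"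
  shows "min_dist d C = v"
proof -
  have "{x0, y0} \<subseteq> C" using assms by auto
  hence "card {x0, y0} \<le> card C" using assms(1) by (rule card_mono[rotated])
  hence c: "\<not> card C \<le> 1" using assms(4) by simp
  let ?D = "{d x y | x y. x \<in> C \<and> y \<in> C \<and> x \<noteq> y}"
  have "?D \<subseteq> (\<lambda>(x, y). d x y) ` (C \<times> C)" by auto
  hence fin: "finite ?D" using assms(1) by (meson finite_SigmaI finite_imageI finite_subset)
  have "v \<in> ?D" using assms by blast
  moreover have "\<forall>w\<in>?D. v \<le> w" using assms(6) by blast
  ultimately have "Min ?D = v" using fin by (intro Min_eqI) auto
  thus ?thesis unfolding min_dist_def using c by simp
qed

context tower
begin

lemma stab:
  assumes j: "1 \<le> j" "j < L" and x: "x \<noteq> 0" "img x (V j) = V j"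
  shows "x \<in> K"
proof -
  define A where "A = {y. \<forall>v\<in>V j. y * v \<in> V j}"
  have VF: "Fclosed K (V j)" by (rule V_Fclosed)
  have A_add: "y + z \<in> A" if "y \<in> A" "z \<in> A" for y z
    using that VF unfolding A_def Fclosed_def by (auto simp: distrib_right)
  have A_mul: "y * z \<in> A" if "y \<in> A" "z \<in> A" for y z
    using that unfolding A_def by (auto simp: mult.assoc)
  have A_sub: "y - z \<in> A" if "y \<in> A" "z \<in> A" for y z
  proof -
    have "y * v - z * v \<in> V j" if "v \<in> V j" for v
      using Fclosed_minus[OF subK VF] \<open>y \<in> A\<close> \<open>z \<in> A\<close> that unfolding A_def by blast
    thus ?thesis unfolding A_def by (simp add: left_diff_distrib)
  qed
  have A_inv: "inverse y \<in> A" if "y \<in> A" "y \<noteq> 0" for y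
  proof -
    have "img y (V j) \<subseteq> V j" using that unfolding A_def img_def by (auto simp: mult.commute)
    hence eq: "img y (V j) = V j" using card_img[OF \<open>y \<noteq> 0\<close>] by (simp add: card_subset_eq)
    have "inverse y * v \<in> V j" if "v \<in> V j" for v
    proof -
      obtain w where "w \<in> V j" "v = w * y" using \<open>v \<in> V j\<close> eq unfolding img_def by blast
      moreover have hv: "inverse y * v = w"
      proof -
        have "inverse y * v = w * (inverse y * y)" using \<open>v = w * y\<close> by (simp only: mult_ac)
        also have "\<dots> = w" using \<open>y \<noteq> 0\<close> by simp
        finally show ?thesis .
      qed
      ultimately show ?thesis by (simp only: hv)
    qed
    thus ?thesis unfolding A_def by blast
  qed
  have A00: "0 \<in> A" using VF unfolding A_def Fclosed_def by simp
  have A01: "1 \<in> A" unfolding A_def by simp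
  note A0 = A00 A01
  have subA: "subfld A" unfolding subfld_def
    by (intro conjI ballI impI) (simp_all add: A0 A_add A_mul A_sub A_inv)
  have KA: "K \<subseteq> A" using VF unfolding A_def Fclosed_def by blast
  have xA: "x \<in> A" using x unfolding A_def img_def by (auto simp: mult.commute)
  have AV: "A \<subseteq> V j" using one_in_V[OF j(1)] unfolding A_def by force
  have AK: "Fclosed K A" unfolding Fclosed_def using A0 A_add A_mul KA by blast
  obtain d where d: "card A = card K ^ d" using greedy[OF subK AK] by blast
  have VA: "Fclosed A (V j)" using VF unfolding Fclosed_def A_def by blast
  obtain a where a: "card (V j) = card A ^ a" using greedy[OF subA VA] by blast
  define V' where "V' = V j \<inter> img \<beta> (V j)"
  have V'A: "Fclosed A V'" unfolding Fclosed_def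
  proof (intro conjI ballI)
    show "0 \<in> V'" using VF unfolding V'_def img_def Fclosed_def by force
  next
    fix u v assume "u \<in> V'" "v \<in> V'"
    then obtain u' v' where h: "u \<in> V j" "v \<in> V j" "u' \<in> V j" "v' \<in> V j" "u = u' * \<beta>" "v = v' * \<beta>"
      unfolding V'_def img_def by blast
    have "u + v = (u' + v') * \<beta>" using h by (simp add: distrib_right)
    moreover have "u' + v' \<in> V j" "u + v \<in> V j" using h VF unfolding Fclosed_def by blast+
    ultimately show "u + v \<in> V'" unfolding V'_def img_def by blast
  next
    fix c u assume c: "c \<in> A" and "u \<in> V'"
    then obtain u' where h: "u \<in> V j" "u' \<in> V j" "u = u' * \<beta>" unfolding V'_def img_def by blast
    have "c * u = (c * u') * \<beta>" using h by (simp add: mult.assoc)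
    moreover have "c * u' \<in> V j" "c * u \<in> V j" using h c unfolding A_def by blast+
    ultimately show "c * u \<in> V'" unfolding V'_def img_def by blast
  qed
  obtain b where b: "card V' = card A ^ b" using greedy[OF subA V'A] by blast
  have V'K: "Fclosed K V'" using Fclosed_mono[OF V'A KA] .
  have low: "img \<beta> (V (j - 1)) \<subseteq> V'"
  proof
    fix y assume "y \<in> img \<beta> (V (j - 1))"
    then obtain w where w: "w \<in> V (j - 1)" "y = w * \<beta>" unfolding img_def by blast
    have "y \<in> V j" using V_shift[OF w(1)] w(2) j(1) by simp
    moreover have "w \<in> V j" using w(1) V_mono[of "j - 1" j] by auto
    ultimately show "y \<in> V'" using w unfolding V'_def img_def by blast
  qed
  have c1: "card K ^ (j - 1) \<le> card V'"
  proof -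
    have "card (img \<beta> (V (j - 1))) = card K ^ (j - 1)" using card_img[OF beta_ne0] card_V[of "j - 1"] j by simp
    thus ?thesis using low by (metis card_mono finite)
  qed
  have neq: "V' \<noteq> V j"
  proof
    assume "V' = V j"
    hence "V j \<subseteq> img \<beta> (V j)" unfolding V'_def by blast
    hence "V j = img \<beta> (V j)" using card_img[OF beta_ne0, of "V j"] by (intro card_subset_eq) auto
    hence "img \<beta> (V j) = V j" by simp
    hence bA: "\<beta> \<in> A" unfolding A_def img_def by (auto simp: mult.commute)
    have "\<beta> ^ r \<in> A" for r
    proof (induction r)
      case 0 then show ?case using A0 by simp
    next
      case (Suc r) then show ?case using A_mul[OF bA] by simp
    qed
    hence "\<beta> ^ j \<in> V j" using AV by blast
    thus False using indep[OF j(2)] by simp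
  qed
  have "card K * card V' \<le> card (V j)"
    using coset_le[OF subK V'K VF _ neq] unfolding V'_def by blast
  hence c2: "card K * card V' \<le> card K ^ j" using card_V[of j] j by simp
  have k2: "2 \<le> card K" by (rule K_ge2)
  have "card V' \<le> card K ^ (j - 1)"
  proof -
    have "card K * card V' \<le> card K * card K ^ (j - 1)" using c2 j(1)
      by (metis Suc_diff_1 less_le_trans not_one_le_zero linorder_not_le power_Suc zero_less_one)
    thus ?thesis using k2 by simp
  qed
  hence cV': "card V' = card K ^ (j - 1)" using c1 by simp
  have e1: "j = d * a"
  proof -
    have "card K ^ j = card K ^ (d * a)" using a d card_V[of j] j by (simp add: power_mult)
    thus ?thesis using k2 by (simp add: power_inject_exp)
  qed
  have e2: "j - 1 = d * b"
  proof -
    have "card K ^ (j - 1) = card K ^ (d * b)" using b d cV' by (simp add: power_mult)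
    thus ?thesis using k2 by (simp add: power_inject_exp)
  qed
  have "d * a = d * b + 1" using e1 e2 j(1) by linarith
  hence "d dvd 1" by (metis dvd_add_right_iff dvd_triv_left)
  hence "d = 1" by simp
  hence "card A = card K" using d by simp
  hence "K = A" using KA by (intro card_subset_eq) auto
  thus ?thesis using xA by simp
qed

lemma dim_K:
  assumes "Fclosed K U" "card U = card K ^ e" shows "dim_Fq q U = mi * e"
proof (rule dim_Fq_card[OF subFq cardFq])
  show "Fclosed (Fqm q 1) U" using Fclosed_mono[OF assms(1) Fq_sub_K] .
  show "card U = q ^ (mi * e)" using assms(2) cardK by (simp add: power_mult)
qed

lemma Kpow: "Fclosed K U \<Longrightarrow> \<exists>e. card U = card K ^ e"
  using greedy[OF subK] by blast

lemma sum_sup: "Fclosed K U' \<Longrightarrow> U \<subseteq> subsp_sum U U'"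
  unfolding subsp_sum_def Fclosed_def by force

lemma sum_sup2: "Fclosed K U \<Longrightarrow> U' \<subseteq> subsp_sum U U'"
  unfolding subsp_sum_def Fclosed_def by force

lemma dist_lb:
  assumes U: "Fclosed K U" "Fclosed K U'" "card U = card K ^ e" "card U' = card K ^ e" "U \<noteq> U'"
  shows "2 * mi \<le> subspace_dist q U U'"
proof -
  have k2: "2 \<le> card K" by (rule K_ge2)
  have IK: "Fclosed K (U \<inter> U')" using Fclosed_Int[OF U(1,2)] .
  have SK: "Fclosed K (subsp_sum U U')" using Fclosed_sum[OF U(1,2)] .
  obtain a where a: "card (U \<inter> U') = card K ^ a" using Kpow[OF IK] by blast
  obtain b where b: "card (subsp_sum U U') = card K ^ b" using Kpow[OF SK] by blast
  have "U \<inter> U' \<noteq> U"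
  proof
    assume "U \<inter> U' = U" hence "U \<subseteq> U'" by blast
    hence "U = U'" using U(3,4) by (simp add: card_subset_eq)
    thus False using U(5) by simp
  qed
  hence "card K * card (U \<inter> U') \<le> card U" using coset_le[OF subK IK U(1)] by blast
  hence "card K ^ Suc a \<le> card K ^ e" using a U(3) by simp
  hence ae: "Suc a \<le> e" using k2 power_le_imp_le_exp[of "card K" "Suc a" e] by simp
  have "U \<noteq> subsp_sum U U'"
  proof
    assume "U = subsp_sum U U'" hence "U' \<subseteq> U" using sum_sup2[OF U(1)] by blast
    hence "U' = U" using U(3,4) by (simp add: card_subset_eq)
    thus False using U(5) by simp
  qed
  hence "card K * card U \<le> card (subsp_sum U U')" using coset_le[OF subK U(1) SK sum_sup[OF U(2)]] by blast
  hence "card K ^ Suc e \<le> card K ^ b" using b U(3) by simp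
  hence eb: "Suc e \<le> b" using k2 power_le_imp_le_exp[of "card K" "Suc e" b] by simp
  have h1: "subspace_dist q U U' = mi * b - mi * a"
    unfolding subspace_dist_def using dim_K[OF SK b] dim_K[OF IK a] by simp
  have "a + 2 \<le> b" using ae eb by simp
  hence h2: "mi * (a + 2) \<le> mi * b" by (rule mult_le_mono2)
  have h3: "mi * a + 2 * mi \<le> mi * b" using h2 by (simp add: distrib_left mult.commute)
  show ?thesis using h1 h3 by linarith
qed

lemma beta_notK: "\<beta> \<notin> K"
  using indep[of 1] L_facts V_1 by simp

lemma V_neq: assumes "1 \<le> j" "j < L" shows "V j \<noteq> img \<beta> (V j)"
proof
  assume "V j = img \<beta> (V j)"
  hence "\<beta> \<in> K" using stab[OF assms beta_ne0] by simp
  thus False using beta_notK by simp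
qed

lemma dist_pair:
  assumes j: "1 \<le> j" "j < L"
  shows "subspace_dist q (V j) (img \<beta> (V j)) = 2 * mi"
proof -
  have k2: "2 \<le> card K" by (rule K_ge2)
  let ?U = "V j" and ?U' = "img \<beta> (V j)"
  have U: "Fclosed K ?U" "Fclosed K ?U'" using V_Fclosed Fclosed_img by blast+
  have cU: "card ?U = card K ^ j" "card ?U' = card K ^ j" using card_V[of j] j card_img[OF beta_ne0] by auto
  have lb: "2 * mi \<le> subspace_dist q ?U ?U'" by (rule dist_lb[OF U cU V_neq[OF j]])
  have IK: "Fclosed K (?U \<inter> ?U')" using Fclosed_Int[OF U(1,2)] .
  have SK: "Fclosed K (subsp_sum ?U ?U')" using Fclosed_sum[OF U(1,2)] .
  obtain a where a: "card (?U \<inter> ?U') = card K ^ a" using Kpow[OF IK] by blast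
  obtain b where b: "card (subsp_sum ?U ?U') = card K ^ b" using Kpow[OF SK] by blast
  have "subsp_sum ?U ?U' \<subseteq> V (Suc j)"
  proof (rule subsp_sum_sub[OF V_Fclosed])
    show "V j \<subseteq> V (Suc j)" by (rule V_mono) simp
    show "img \<beta> (V j) \<subseteq> V (Suc j)" using V_shift unfolding img_def by blast
  qed
  hence "card K ^ b \<le> card K ^ Suc j" using b card_V[of "Suc j"] j by (metis card_mono finite Suc_leI)
  hence bj: "b \<le> Suc j" using k2 power_le_imp_le_exp[of "card K" b "Suc j"] by simp
  have "img \<beta> (V (j - 1)) \<subseteq> ?U \<inter> ?U'"
  proof
    fix y assume "y \<in> img \<beta> (V (j - 1))"
    then obtain w where w: "w \<in> V (j - 1)" "y = w * \<beta>" unfolding img_def by blast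
    have "y \<in> V j" using V_shift[OF w(1)] w(2) j(1) by simp
    moreover have "w \<in> V j" using w(1) V_mono[of "j - 1" j] by auto
    ultimately show "y \<in> ?U \<inter> ?U'" using w unfolding img_def by blast
  qed
  moreover have "card (img \<beta> (V (j - 1))) = card K ^ (j - 1)" using card_img[OF beta_ne0] card_V[of "j - 1"] j by simp
  ultimately have "card K ^ (j - 1) \<le> card K ^ a" using a by (metis card_mono finite)
  hence aj: "j - 1 \<le> a" using k2 by (simp add: power_le_imp_le_exp)
  have "subspace_dist q ?U ?U' = mi * b - mi * a"
    unfolding subspace_dist_def using dim_K[OF SK b] dim_K[OF IK a] by simp
  also have "\<dots> \<le> mi * Suc j - mi * (j - 1)"
  proof -
    have "mi * b \<le> mi * Suc j" "mi * (j - 1) \<le> mi * a"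
      using mult_le_mono2[OF bj, of mi] mult_le_mono2[OF aj, of mi] by simp_all
    thus ?thesis by linarith
  qed
  also have "\<dots> = 2 * mi" using j(1) by (cases j) (auto simp: algebra_simps)
  finally show ?thesis using lb by simp
qed

end

context tower
begin

definition Ff where "Ff s = map (\<lambda>j. img (\<alpha> ^ s) (V j)) [1..<L]"

lemma tf: "tower_flag q mi L \<beta> = map V [1..<L]"
  unfolding tower_flag_def V_def gspan_def K_def by simp

lemma orbit: "flag_orbit \<alpha> (map V [1..<L]) = range Ff"
  unfolding flag_orbit_def Ff_def img_def by (auto simp: comp_def)

lemma Ff_len: "length (Ff s) = L - 1" unfolding Ff_def by simp

lemma Ff_nth: "j < L - 1 \<Longrightarrow> Ff s ! j = img (\<alpha> ^ s) (V (Suc j))"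
  unfolding Ff_def by simp

lemma Ff_mod: "Ff s = Ff (s mod T)"
  unfolding Ff_def using alpha_pow_mod[of s] by simp

lemma range_Ff: "range Ff = Ff ` {..<T}"
proof
  show "range Ff \<subseteq> Ff ` {..<T}"
  proof
    fix F assume "F \<in> range Ff"
    then obtain s where "F = Ff s" by blast
    hence "F = Ff (s mod T)" using Ff_mod by simp
    moreover have "s mod T < T" using T_pos by simp
    ultimately show "F \<in> Ff ` {..<T}" by blast
  qed
qed auto

lemma fin_Ff: "finite (range Ff)" unfolding range_Ff by simp

lemma comp_eq:
  assumes j: "1 \<le> j" "j < L" and eq: "img (\<alpha> ^ s) (V j) = img (\<alpha> ^ t) (V j)"
  shows "Ff s = Ff t"
proof -
  define x where "x = \<alpha> ^ s * inverse (\<alpha> ^ t)"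
  have at: "\<alpha> ^ t \<noteq> 0" using alpha_ne0 by simp
  have x0: "x \<noteq> 0" unfolding x_def using alpha_ne0 by simp
  have "img (inverse (\<alpha> ^ t)) (img (\<alpha> ^ s) (V j)) = img (inverse (\<alpha> ^ t)) (img (\<alpha> ^ t) (V j))"
    using eq by simp
  hence "img x (V j) = img 1 (V j)" unfolding img_img x_def using at by simp
  hence "img x (V j) = V j" by (simp add: img_1)
  hence xK: "x \<in> K" by (rule stab[OF j x0])
  have xs: "x * \<alpha> ^ t = \<alpha> ^ s" unfolding x_def using at by (simp add: field_simps)
  have "img (\<alpha> ^ s) (V l) = img (\<alpha> ^ t) (V l)" for l
  proof -
    have "img (\<alpha> ^ s) (V l) = img (\<alpha> ^ t) (img x (V l))" unfolding img_img xs ..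
    also have "img x (V l) = V l" by (rule img_fixed[OF V_Fclosed xK x0])
    finally show ?thesis .
  qed
  thus ?thesis unfolding Ff_def by simp
qed

lemma Ff_neq_comp:
  assumes "Ff s \<noteq> Ff t" "j < L - 1" shows "Ff s ! j \<noteq> Ff t ! j"
proof
  assume eq: "Ff s ! j = Ff t ! j"
  have j: "1 \<le> Suc j" "Suc j < L" using assms(2) by simp_all
  have "img (\<alpha> ^ s) (V (Suc j)) = img (\<alpha> ^ t) (V (Suc j))" using eq Ff_nth[OF assms(2)] by simp
  hence "Ff s = Ff t" by (rule comp_eq[OF j])
  thus False using assms(1) by simp
qed

lemma comp_props:
  assumes "j < L - 1"
  shows "Fclosed K (Ff s ! j)" "card (Ff s ! j) = card K ^ Suc j"
proof -
  show "Fclosed K (Ff s ! j)" unfolding Ff_nth[OF assms] by (rule Fclosed_img[OF V_Fclosed])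
  have "card (V (Suc j)) = card K ^ Suc j" using card_V assms by simp
  moreover have "card (img (\<alpha> ^ s) (V (Suc j))) = card (V (Suc j))" using card_img[of "\<alpha> ^ s" "V (Suc j)"] alpha_ne0 by simp
  ultimately show "card (Ff s ! j) = card K ^ Suc j" unfolding Ff_nth[OF assms] by simp
qed

lemma alphaN: "\<alpha> ^ N = \<beta>" unfolding \<beta>_def ..

lemma Ff_0N: "Ff 0 \<noteq> Ff N"
proof -
  have "0 < L - 1" using L_facts by simp
  hence "Ff 0 ! 0 = V 1" "Ff N ! 0 = img \<beta> (V 1)" using Ff_nth[of 0] alphaN img_1 by auto
  moreover have "V 1 \<noteq> img \<beta> (V 1)" using V_neq[of 1] L_facts by simp
  ultimately show ?thesis by metis
qed

lemma flag_lb: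
  assumes "Ff s \<noteq> Ff t" shows "(L - 1) * (2 * mi) \<le> flag_dist q (Ff s) (Ff t)"
proof -
  have "\<And>j. j \<in> {..<L - 1} \<Longrightarrow> 2 * mi \<le> subspace_dist q (Ff s ! j) (Ff t ! j)"
  proof -
    fix j assume "j \<in> {..<L - 1}"
    hence j: "j < L - 1" by simp
    show "2 * mi \<le> subspace_dist q (Ff s ! j) (Ff t ! j)"
      by (rule dist_lb[OF comp_props(1)[OF j] comp_props(1)[OF j] comp_props(2)[OF j] comp_props(2)[OF j]
            Ff_neq_comp[OF assms j]])
  qed
  hence "(\<Sum>j<L - 1. 2 * mi) \<le> (\<Sum>j<L - 1. subspace_dist q (Ff s ! j) (Ff t ! j))"
    by (rule sum_mono)
  thus ?thesis unfolding flag_dist_def Ff_len by simp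
qed

lemma comp_pair: assumes j: "j < L - 1" shows "subspace_dist q (Ff 0 ! j) (Ff N ! j) = 2 * mi"
proof -
  have "1 \<le> Suc j" "Suc j < L" using j by simp_all
  hence "subspace_dist q (V (Suc j)) (img \<beta> (V (Suc j))) = 2 * mi" by (rule dist_pair)
  thus ?thesis using Ff_nth[OF j, of 0] Ff_nth[OF j, of N] alphaN by (simp add: img_1)
qed

lemma flag_pair: "flag_dist q (Ff 0) (Ff N) = (L - 1) * (2 * mi)"
proof -
  have "flag_dist q (Ff 0) (Ff N) = (\<Sum>j<L - 1. 2 * mi)"
    unfolding flag_dist_def Ff_len by (intro sum.cong) (auto simp: comp_pair)
  thus ?thesis by simp
qed

lemma min_flag: "min_dist (flag_dist q) (range Ff) = (L - 1) * (2 * mi)"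
proof (rule min_dist_eqI[of _ "Ff 0" "Ff N"])
  show "finite (range Ff)" by (rule fin_Ff)
  show "Ff 0 \<in> range Ff" "Ff N \<in> range Ff" by simp_all
  show "Ff 0 \<noteq> Ff N" by (rule Ff_0N)
  show "flag_dist q (Ff 0) (Ff N) = (L - 1) * (2 * mi)" by (rule flag_pair)
  fix F G assume "F \<in> range Ff" "G \<in> range Ff" "F \<noteq> G"
  then obtain s t where "F = Ff s" "G = Ff t" by blast
  thus "(L - 1) * (2 * mi) \<le> flag_dist q F G" using flag_lb \<open>F \<noteq> G\<close> by simp
qed

lemma proj: "projected_code (range Ff) j = (\<lambda>F. F ! j) ` range Ff"
  unfolding projected_code_def by auto

lemma disj: "disjoint_code (L - 1) (range Ff)"
  unfolding disjoint_code_def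
proof (intro allI impI)
  fix j assume j: "j < L - 1"
  have "inj_on (\<lambda>F. F ! j) (range Ff)"
    using Ff_neq_comp[OF _ j] by (auto simp: inj_on_def)
  thus "card (projected_code (range Ff) j) = card (range Ff)" unfolding proj by (rule card_image)
qed

lemma min_proj: assumes j: "j < L - 1"
  shows "min_dist (subspace_dist q) (projected_code (range Ff) j) = 2 * mi"
proof (rule min_dist_eqI)
  show "finite (projected_code (range Ff) j)" by simp
  show "Ff 0 ! j \<in> projected_code (range Ff) j" unfolding proj by blast
  show "Ff N ! j \<in> projected_code (range Ff) j" unfolding proj by blast
  show "Ff 0 ! j \<noteq> Ff N ! j" by (rule Ff_neq_comp[OF Ff_0N j])
  show "subspace_dist q (Ff 0 ! j) (Ff N ! j) = 2 * mi" by (rule comp_pair[OF j])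
  fix U U' assume "U \<in> projected_code (range Ff) j" "U' \<in> projected_code (range Ff) j" "U \<noteq> U'"
  then obtain s t where st: "U = Ff s ! j" "U' = Ff t ! j" "U \<noteq> U'" unfolding proj by blast
  show "2 * mi \<le> subspace_dist q U U'" unfolding st(1,2)
    by (rule dist_lb[OF comp_props(1)[OF j] comp_props(1)[OF j] comp_props(2)[OF j] comp_props(2)[OF j]])
       (use st in simp)
qed

lemma consistent: "consistent_code q (L - 1) (range Ff)"
  unfolding consistent_code_def using disj min_flag min_proj by simp

lemma best: "best_friend_code q n mi (range Ff)"
  unfolding best_friend_code_def
proof (intro conjI allI impI)
  have midvd: "mi dvd n" using mi_dvd M_dvd by (rule dvd_trans)
  show "friend_code q n mi (range Ff)"
    unfolding friend_code_def
  proof (intro conjI ballI)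
    show "mi dvd n" by (rule midvd)
    fix F U assume F: "F \<in> range Ff" and U: "U \<in> set F"
    obtain s where "F = Ff s" using F by blast
    hence "U \<in> (\<lambda>j. img (\<alpha> ^ s) (V j)) ` set [1..<L]" using U unfolding Ff_def by simp
    then obtain j where "U = img (\<alpha> ^ s) (V j)" by blast
    hence "Fclosed K U" using Fclosed_img[OF V_Fclosed] by simp
    thus "friend_subspace q n mi U" unfolding friend_subspace_def Fclosed_def K_def using midvd by simp
  qed
  fix m' assume fc: "friend_code q n m' (range Ff)"
  have "img (\<alpha> ^ 0) (V 1) \<in> set (Ff 0)" unfolding Ff_def using L_facts by simp
  hence "V 1 \<in> set (Ff 0)" by (simp add: img_1)
  hence "friend_subspace q n m' (V 1)" using fc unfolding friend_code_def by blast
  hence "\<forall>c\<in>Fqm q m'. c * 1 \<in> V 1" using one_in_V[of 1] unfolding friend_subspace_def by blast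
  thus "(Fqm q m' :: 'a set) \<subseteq> Fqm q mi" using V_1 unfolding K_def by (simp add: subset_iff)
qed

end

theorem mainTheorem9:
  fixes q n k i :: nat and m :: "nat \<Rightarrow> nat" and \<alpha> :: "'a::{field,finite}"
  assumes q: "is_prime_power q"
    and card: "card (UNIV :: 'a set) = q ^ n"
    and m_pos: "0 < m 1"
    and m_mono: "\<And>i. 1 \<le> i \<Longrightarrow> i \<le> k \<Longrightarrow> m i < m (i + 1)"
    and m_dvd: "\<And>i. 1 \<le> i \<Longrightarrow> i \<le> k \<Longrightarrow> m i dvd m (i + 1)"
    and m_last: "m (k + 1) = n"
    and prim: "primitive_elem \<alpha>"
    and i: "1 \<le> i" "i \<le> k"
  shows "let \<alpha>' = (\<lambda>l. \<alpha> ^ ((q ^ n - 1) div (q ^ m l - 1)));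
             L = m (i + 1) div m i;
             C = flag_orbit \<alpha> (tower_flag q (m i) L (\<alpha>' (i + 1)))
         in consistent_code q (L - 1) C
            \<and> min_dist (flag_dist q) C = 2 * (m (i + 1) - m i)
            \<and> best_friend_code q n (m i) C"
proof -
  have mpos: "1 \<le> l \<longrightarrow> l \<le> k + 1 \<longrightarrow> 0 < m l" for l
  proof (induction l)
    case 0 then show ?case by simp
  next
    case (Suc l)
    show ?case
    proof (cases "l = 0")
      case True then show ?thesis using m_pos by simp
    next
      case False
      show ?thesis
      proof (intro impI)
        assume "1 \<le> Suc l" "Suc l \<le> k + 1"
        hence l: "1 \<le> l" "l \<le> k" using False by auto
        hence "0 < m l" using Suc by simp
        moreover have "m l < m (l + 1)" using m_mono[OF l] .
        ultimately show "0 < m (Suc l)" by simp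
      qed
    qed
  qed
  have mchain: "i + 1 + d \<le> k + 1 \<longrightarrow> m (i + 1) dvd m (i + 1 + d)" for d
  proof (induction d)
    case 0 then show ?case by simp
  next
    case (Suc d)
    show ?case
    proof
      assume h: "i + 1 + Suc d \<le> k + 1"
      hence a: "m (i + 1) dvd m (i + 1 + d)" using Suc by simp
      have "1 \<le> i + 1 + d" "i + 1 + d \<le> k" using h by auto
      hence "m (i + 1 + d) dvd m (i + 1 + d + 1)" by (rule m_dvd)
      thus "m (i + 1) dvd m (i + 1 + Suc d)" using a dvd_trans by simp
    qed
  qed
  have Mdvd: "m (i + 1) dvd n"
  proof -
    have "i + 1 + (k - i) = k + 1" using i by simp
    thus ?thesis using mchain[of "k - i"] m_last by simp
  qed
  have npos: "0 < n" using mpos[of "k + 1"] m_last by simp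
  have mipos: "0 < m i" using mpos[of i] i by simp
  have milt: "m i < m (i + 1)" using m_mono[OF i] .
  have midvd: "m i dvd m (i + 1)" using m_dvd[OF i] .
  have "m (i + 1) \<le> n" using Mdvd npos by (rule dvd_imp_le)
  hence n2: "2 \<le> n" using mipos milt by simp
  interpret tw: tower q n \<alpha> "m i" "m (i + 1)"
    by unfold_locales (use q card n2 prim mipos milt midvd Mdvd in auto)
  have eq: "flag_orbit \<alpha> (tower_flag q (m i) tw.L (\<alpha> ^ ((q ^ n - 1) div (q ^ m (i + 1) - 1))))
      = range tw.Ff"
    using tw.tf tw.orbit unfolding tw.\<beta>_def tw.N_def tw.T_def by simp
  have Lx: "m (i + 1) div m i = tw.L" unfolding tw.L_def ..
  have ar: "(tw.L - 1) * (2 * m i) = 2 * (m (i + 1) - m i)"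
  proof -
    have "(tw.L - 1) * (2 * m i) = tw.L * (2 * m i) - 2 * m i" by (simp add: diff_mult_distrib)
    also have "tw.L * (2 * m i) = 2 * m (i + 1)" using tw.L_facts(2) by (simp add: mult.commute mult.left_commute)
    also have "2 * m (i + 1) - 2 * m i = 2 * (m (i + 1) - m i)" by (simp add: diff_mult_distrib2)
    finally show ?thesis .
  qed
  show ?thesis
    unfolding Let_def Lx eq using tw.consistent tw.min_flag tw.best ar by simp
qed

end
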